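(* In the combinatorial auction setting, the $n$-VCG mechanism is a tight and total simplification of the VCG mechanism with respect to Nash equilibria.
   Context: Combinatorial auction: finite item set $G$, agents $N=\{1,\dots,n\}$; an outcome assigns pairwise disjoint bundles $o_i\subseteq G$. Agent $i$'s type $\theta_i$ gives a valuation $v_i(\cdot,\theta_i):2^G\to\mathbb{R}_{\ge0}$ with $v_i(\emptyset,\theta_i)=0$, monotone under inclusion; utilities are quasilinear. VCG mechanism: each agent submits a bid vector $x_i$ assigning a bid $x_i(B)$ to each bundle $B\subseteq G$ (with $x_i(\emptyset)=0$); an outcome $o$ maximizing $\sum_i x_i(o_i)$ is chosen and agent $i$ pays $\max_{o'}\sum_{j\ne i}x_j(o'_j)-\sum_{j\ne i}x_j(o_j)$. The $n$-VCG mechanism is the simplification in which each agent's message set is restricted to bid vectors with at most $n$ non-zero entries, with the same allocation and payment rule. Complete information: for a type profile $\theta$, a message profile is a Nash equilibrium if no agent can strictly increase its utility by a unilateral deviation within its message set. Tight: for every $\theta$, every Nash equilibrium of $n$-VCG is a Nash equilibrium of VCG. Total: for every $\theta$ and every Nash equilibrium of VCG, there is a Nash equilibrium of $n$-VCG yielding the same outcome and payments. *)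

theory Defs
  imports Complex_Main
begin

text \<open>Agents are 0,...,n-1 (the paper's 1,...,n); items form a finite set G.\<close>

type_synonym 'g outcome = "nat \<Rightarrow> 'g set"
type_synonym 'g bid = "'g set \<Rightarrow> real"
type_synonym 'g profile = "nat \<Rightarrow> 'g bid"

definition outcomes :: "'g set \<Rightarrow> nat \<Rightarrow> 'g outcome set" where
  "outcomes G n = {u. (\<forall>i<n. u i \<subseteq> G) \<and> (\<forall>i. n \<le> i \<longrightarrow> u i = {})
                    \<and> (\<forall>i<n. \<forall>j<n. i \<noteq> j \<longrightarrow> u i \<inter> u j = {})}"

definition valuation :: "'g set \<Rightarrow> ('g set \<Rightarrow> real) \<Rightarrow> bool" where
  "valuation G w \<longleftrightarrow> w {} = 0 \<and> (\<forall>B. B \<subseteq> G \<longrightarrow> 0 \<le> w B)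
     \<and> (\<forall>A B. A \<subseteq> B \<and> B \<subseteq> G \<longrightarrow> w A \<le> w B)"

text \<open>Messages of VCG: a (nonnegative) bid for every bundle of G, zero on the empty bundle
  (and, as a normalisation, zero outside the bundles of G).\<close>
definition bid_vec :: "'g set \<Rightarrow> 'g bid \<Rightarrow> bool" where
  "bid_vec G b \<longleftrightarrow> b {} = 0 \<and> (\<forall>B. B \<subseteq> G \<longrightarrow> 0 \<le> b B) \<and> (\<forall>B. \<not> B \<subseteq> G \<longrightarrow> b B = 0)"

text \<open>Messages of n-VCG: bid vectors with at most n non-zero entries.\<close>
definition nbid_vec :: "'g set \<Rightarrow> nat \<Rightarrow> 'g bid \<Rightarrow> bool" where
  "nbid_vec G n b \<longleftrightarrow> bid_vec G b \<and> card {B. B \<subseteq> G \<and> b B \<noteq> 0} \<le> n"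

definition welfare :: "'g profile \<Rightarrow> nat set \<Rightarrow> 'g outcome \<Rightarrow> real" where
  "welfare x S u = (\<Sum>j\<in>S. x j (u j))"

definition optimal :: "'g set \<Rightarrow> nat \<Rightarrow> 'g profile \<Rightarrow> 'g outcome set" where
  "optimal G n x = {u \<in> outcomes G n.
      welfare x {..<n} u = Max (welfare x {..<n} ` outcomes G n)}"

definition alloc :: "'g set \<Rightarrow> nat \<Rightarrow> ('g outcome \<Rightarrow> nat) \<Rightarrow> 'g profile \<Rightarrow> 'g outcome" where
  "alloc G n rk x = (THE u. u \<in> optimal G n x \<and> (\<forall>u'\<in>optimal G n x. rk u \<le> rk u'))"

definition payment :: "'g set \<Rightarrow> nat \<Rightarrow> ('g outcome \<Rightarrow> nat) \<Rightarrow> 'g profile \<Rightarrow> nat \<Rightarrow> real" where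
  "payment G n rk x i =
     Max (welfare x ({..<n} - {i}) ` outcomes G n) - welfare x ({..<n} - {i}) (alloc G n rk x)"

definition utility :: "'g set \<Rightarrow> nat \<Rightarrow> ('g outcome \<Rightarrow> nat) \<Rightarrow> (nat \<Rightarrow> 'g set \<Rightarrow> real)
    \<Rightarrow> 'g profile \<Rightarrow> nat \<Rightarrow> real" where
  "utility G n rk v x i = v i (alloc G n rk x i) - payment G n rk x i"

text \<open>Nash equilibrium of the mechanism with message set M (same allocation/payment rule).\<close>
definition is_NE :: "('g bid \<Rightarrow> bool) \<Rightarrow> 'g set \<Rightarrow> nat \<Rightarrow> ('g outcome \<Rightarrow> nat)
    \<Rightarrow> (nat \<Rightarrow> 'g set \<Rightarrow> real) \<Rightarrow> 'g profile \<Rightarrow> bool" where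
  "is_NE M G n rk v x \<longleftrightarrow> (\<forall>i<n. M (x i)) \<and>
     (\<forall>i<n. \<forall>b. M b \<longrightarrow> utility G n rk v (x(i := b)) i \<le> utility G n rk v x i)"

definition val_profile :: "'g set \<Rightarrow> nat \<Rightarrow> (nat \<Rightarrow> 'g set \<Rightarrow> real) \<Rightarrow> bool" where
  "val_profile G n v \<longleftrightarrow> (\<forall>i<n. valuation G (v i))"

definition tight :: "'g set \<Rightarrow> nat \<Rightarrow> ('g outcome \<Rightarrow> nat) \<Rightarrow> bool" where
  "tight G n rk \<longleftrightarrow> (\<forall>v. val_profile G n v \<longrightarrow>
     (\<forall>y. is_NE (nbid_vec G n) G n rk v y \<longrightarrow> is_NE (bid_vec G) G n rk v y))"

definition total :: "'g set \<Rightarrow> nat \<Rightarrow> ('g outcome \<Rightarrow> nat) \<Rightarrow> bool" where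
  "total G n rk \<longleftrightarrow> (\<forall>v. val_profile G n v \<longrightarrow>
     (\<forall>x. is_NE (bid_vec G) G n rk v x \<longrightarrow>
        (\<exists>y. is_NE (nbid_vec G n) G n rk v y \<and> alloc G n rk y = alloc G n rk x
             \<and> (\<forall>i<n. payment G n rk y i = payment G n rk x i))))"

end

theory Submission
  imports Defs
begin

lemma finite_outcomes: "finite G \<Longrightarrow> finite (outcomes G n)"
proof -
  assume G: "finite G"
  have "outcomes G n \<subseteq> {f. \<forall>x. (x \<in> {..<n} \<longrightarrow> f x \<in> Pow G) \<and> (x \<notin> {..<n} \<longrightarrow> f x = {})}"
    unfolding outcomes_def by auto
  moreover have "finite {f. \<forall>x. (x \<in> {..<n} \<longrightarrow> f x \<in> Pow G) \<and> (x \<notin> {..<n} \<longrightarrow> f x = ({}::'a set))}"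
    by (rule finite_set_of_finite_funs) (use G in auto)
  ultimately show ?thesis by (rule finite_subset)
qed

lemma empty_outcome: "(\<lambda>_. {}) \<in> outcomes G n"
  unfolding outcomes_def by auto

lemma max_ge: "finite G \<Longrightarrow> u \<in> outcomes G n \<Longrightarrow> f u \<le> Max (f ` outcomes G n)"
  by (simp add: finite_outcomes)

lemma max_attained: "finite G \<Longrightarrow> \<exists>u\<in>outcomes G n. f u = Max (f ` outcomes G n)"
proof -
  assume G: "finite G"
  have "Max (f ` outcomes G n) \<in> f ` outcomes G n"
    by (rule Max_in) (use G finite_outcomes[OF G] empty_outcome[of G n] in auto)
  then show ?thesis by force
qed

lemma alloc_eqI:
  assumes inj: "inj_on rk (outcomes G n)" and u: "u \<in> optimal G n x"
    and m: "\<forall>u'\<in>optimal G n x. rk u \<le> rk u'"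
  shows "alloc G n rk x = u"
  unfolding alloc_def
proof (rule the_equality)
  show "u \<in> optimal G n x \<and> (\<forall>u'\<in>optimal G n x. rk u \<le> rk u')" using u m by auto
next
  fix u2 assume h: "u2 \<in> optimal G n x \<and> (\<forall>u'\<in>optimal G n x. rk u2 \<le> rk u')"
  then have "rk u2 = rk u" using u m by (meson order_antisym)
  moreover have "u2 \<in> outcomes G n" "u \<in> outcomes G n" using h u unfolding optimal_def by auto
  ultimately show "u2 = u" using inj by (meson inj_onD)
qed

lemma alloc_opt:
  assumes G: "finite G" and inj: "inj_on rk (outcomes G n)"
  shows "alloc G n rk x \<in> optimal G n x \<and> (\<forall>u'\<in>optimal G n x. rk (alloc G n rk x) \<le> rk u')"
proof -
  have fin: "finite (optimal G n x)"
    using finite_outcomes[OF G] unfolding optimal_def by auto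
  have ne: "optimal G n x \<noteq> {}"
    using max_attained[OF G, of n "welfare x {..<n}"] unfolding optimal_def by auto
  have "Min (rk ` optimal G n x) \<in> rk ` optimal G n x" using fin ne by auto
  then obtain u where u: "u \<in> optimal G n x" "rk u = Min (rk ` optimal G n x)" by auto
  have m: "\<forall>u'\<in>optimal G n x. rk u \<le> rk u'" using u fin by auto
  have "alloc G n rk x = u" by (rule alloc_eqI[OF inj u(1) m])
  then show ?thesis using u m by simp
qed

lemma alloc_outcome:
  "finite G \<Longrightarrow> inj_on rk (outcomes G n) \<Longrightarrow> alloc G n rk x \<in> outcomes G n"
  using alloc_opt unfolding optimal_def by blast

lemma alloc_max:
  "finite G \<Longrightarrow> inj_on rk (outcomes G n) \<Longrightarrow>
    welfare x {..<n} (alloc G n rk x) = Max (welfare x {..<n} ` outcomes G n)"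
  using alloc_opt unfolding optimal_def by blast

lemma dominated:
  assumes G: "finite G" and inj: "inj_on rk (outcomes G n)"
    and le: "\<forall>u\<in>outcomes G n. welfare x' {..<n} u \<le> welfare x {..<n} u"
    and eq: "welfare x' {..<n} (alloc G n rk x) = welfare x {..<n} (alloc G n rk x)"
  shows "alloc G n rk x' = alloc G n rk x"
proof -
  let ?a = "alloc G n rk x"
  let ?Mx = "Max (welfare x {..<n} ` outcomes G n)"
  have ao: "?a \<in> outcomes G n" by (rule alloc_outcome[OF G inj])
  have am: "welfare x {..<n} ?a = ?Mx" by (rule alloc_max[OF G inj])
  have b: "\<forall>u\<in>outcomes G n. welfare x' {..<n} u \<le> welfare x' {..<n} ?a"
    using le eq am max_ge[OF G] by (metis order_trans)
  have M': "Max (welfare x' {..<n} ` outcomes G n) = welfare x' {..<n} ?a"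
    by (rule Max_eqI) (use finite_outcomes[OF G] b ao in auto)
  have aopt: "?a \<in> optimal G n x'" using ao M' unfolding optimal_def by auto
  have sub: "optimal G n x' \<subseteq> optimal G n x"
  proof
    fix u assume "u \<in> optimal G n x'"
    then have u: "u \<in> outcomes G n" "welfare x' {..<n} u = welfare x' {..<n} ?a"
      using M' unfolding optimal_def by auto
    have "welfare x {..<n} u \<le> ?Mx" using max_ge[OF G u(1)] .
    moreover have "welfare x {..<n} u \<ge> ?Mx" using le u eq am by auto
    ultimately show "u \<in> optimal G n x" using u unfolding optimal_def by auto
  qed
  show ?thesis
    by (rule alloc_eqI[OF inj aopt]) (use sub alloc_opt[OF G inj, of x] in blast)
qed

lemma welfare_upd: "i \<notin> S \<Longrightarrow> welfare (x(i:=b)) S u = welfare x S u"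
  unfolding welfare_def by (intro sum.cong) auto

lemma welfare_upd_fun: "welfare (x(i:=b)) ({..<n}-{i}) = welfare x ({..<n}-{i})"
  by (rule ext) (simp add: welfare_upd)

lemma welfare_split: "i < n \<Longrightarrow> welfare x {..<n} u = x i (u i) + welfare x ({..<n}-{i}) u"
  unfolding welfare_def by (simp add: sum.remove)

lemma welfare_nonneg:
  "\<forall>j<n. bid_vec G (x j) \<Longrightarrow> u \<in> outcomes G n \<Longrightarrow> S \<subseteq> {..<n} \<Longrightarrow> 0 \<le> welfare x S u"
  unfolding welfare_def bid_vec_def outcomes_def by (intro sum_nonneg) auto

lemma utility_eq: "utility G n rk v z i = v i (alloc G n rk z i)
   + welfare z ({..<n}-{i}) (alloc G n rk z) - Max (welfare z ({..<n}-{i}) ` outcomes G n)"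
  unfolding utility_def payment_def by simp


lemma deviation:
  assumes G: "finite G" and inj: "inj_on rk (outcomes G n)" and i: "i < n"
    and bx: "\<forall>j<n. bid_vec G (x j)" and vi: "valuation G (v i)"
    and w: "w \<in> outcomes G n"
  shows "\<exists>b. nbid_vec G n b \<and>
    v i (w i) + welfare x ({..<n}-{i}) w - Max (welfare x ({..<n}-{i}) ` outcomes G n)
      \<le> utility G n rk v (x(i:=b)) i"
proof -
  define Wi where "Wi = welfare x ({..<n}-{i})"
  define M where "M = Max (Wi ` outcomes G n)"
  have WiM: "\<And>u. u \<in> outcomes G n \<Longrightarrow> Wi u \<le> M" unfolding M_def using max_ge[OF G] by blast
  have Wi0: "\<And>u. u \<in> outcomes G n \<Longrightarrow> 0 \<le> Wi u" unfolding Wi_def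
    using welfare_nonneg[OF bx] by auto
  have wiG: "w i \<subseteq> G" using w i unfolding outcomes_def by auto
  have v0: "v i {} = 0" and vnn: "\<And>B. B \<subseteq> G \<Longrightarrow> 0 \<le> v i B" using vi unfolding valuation_def by auto
  show ?thesis
  proof (cases "w i = {}")
    case True
    define b :: "'a set \<Rightarrow> real" where "b = (\<lambda>_. 0)"
    define z where "z = x(i:=b)"
    define u where "u = alloc G n rk z"
    have uo: "u \<in> outcomes G n" unfolding u_def by (rule alloc_outcome[OF G inj])
    have Wz: "welfare z ({..<n}-{i}) = Wi" unfolding z_def Wi_def by (rule welfare_upd_fun)
    have Wzf: "welfare z {..<n} = Wi" 
      by (rule ext) (simp add: welfare_split[OF i] Wz, simp add: z_def b_def)
    have "Wi u = M" using alloc_max[OF G inj, of z] Wzf unfolding u_def M_def by simp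
    then have "utility G n rk v z i = v i (u i)"
      unfolding utility_eq u_def[symmetric] Wz M_def[symmetric] by simp
    moreover have "u i \<subseteq> G" using uo i unfolding outcomes_def by auto
    ultimately have "0 \<le> utility G n rk v z i" using vnn by simp
    moreover have "v i (w i) + Wi w - M \<le> 0" using True v0 WiM[OF w] by simp
    moreover have "nbid_vec G n b" unfolding nbid_vec_def bid_vec_def b_def by simp
    ultimately show ?thesis unfolding z_def Wi_def M_def by fastforce
  next
    case False
    define K where "K = M + 1"
    define b :: "'a set \<Rightarrow> real" where "b = (\<lambda>B. if B = w i then K else 0)"
    define z where "z = x(i:=b)"
    define u where "u = alloc G n rk z"
    have uo: "u \<in> outcomes G n" unfolding u_def by (rule alloc_outcome[OF G inj])
    have Wz: "welfare z ({..<n}-{i}) = Wi" unfolding z_def Wi_def by (rule welfare_upd_fun)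
    have Wzf: "\<And>u'. welfare z {..<n} u' = b (u' i) + Wi u'"
      by (simp add: welfare_split[OF i] Wz, simp add: z_def)
    have M0: "0 \<le> M" using Wi0[OF w] WiM[OF w] by simp
    have opt: "welfare z {..<n} w \<le> welfare z {..<n} u"
      using alloc_max[OF G inj, of z] max_ge[OF G w] unfolding u_def by simp
    have ui: "u i = w i"
    proof (rule ccontr)
      assume "u i \<noteq> w i"
      then have "welfare z {..<n} u = Wi u" using Wzf b_def by simp
      also have "\<dots> \<le> M" using WiM[OF uo] .
      also have "\<dots> < K + Wi w" using Wi0[OF w] K_def by simp
      also have "\<dots> = welfare z {..<n} w" using Wzf b_def by simp
      finally show False using opt by simp
    qed
    have "Wi w \<le> Wi u" using opt Wzf[of u] Wzf[of w] ui by simp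
    moreover have "utility G n rk v z i = v i (w i) + Wi u - M"
      unfolding utility_eq u_def[symmetric] Wz M_def[symmetric] ui by simp
    moreover have "nbid_vec G n b"
    proof -
      have "{B. B \<subseteq> G \<and> b B \<noteq> 0} \<subseteq> {w i}" unfolding b_def by auto
      then have "card {B. B \<subseteq> G \<and> b B \<noteq> 0} \<le> 1"
        using card_mono[of "{w i}"] by fastforce
      moreover have "bid_vec G b" unfolding bid_vec_def b_def K_def using False wiG M0 by auto
      ultimately show ?thesis unfolding nbid_vec_def using i by simp
    qed
    ultimately show ?thesis unfolding z_def Wi_def M_def by fastforce
  qed
qed


lemma nbid_bid: "nbid_vec G n b \<Longrightarrow> bid_vec G b" unfolding nbid_vec_def by simp

lemma tight_thm:
  assumes G: "finite G" and inj: "inj_on rk (outcomes G n)"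
  shows "tight G n rk"
  unfolding tight_def
proof (intro allI impI)
  fix v y assume vp: "val_profile G n v" and ne: "is_NE (nbid_vec G n) G n rk v y"
  have yb: "\<forall>j<n. bid_vec G (y j)" using ne nbid_bid unfolding is_NE_def by blast
  show "is_NE (bid_vec G) G n rk v y"
    unfolding is_NE_def
  proof (intro conjI allI impI)
    fix i assume "i < n" then show "bid_vec G (y i)" using yb by simp
  next
    fix i b assume i: "i < n" and b: "bid_vec G b"
    define u where "u = alloc G n rk (y(i:=b))"
    have uo: "u \<in> outcomes G n" unfolding u_def by (rule alloc_outcome[OF G inj])
    have "utility G n rk v (y(i:=b)) i = v i (u i) + welfare y ({..<n}-{i}) u
        - Max (welfare y ({..<n}-{i}) ` outcomes G n)"
      unfolding utility_eq u_def[symmetric] welfare_upd_fun ..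
    moreover obtain b' where "nbid_vec G n b'" and
      "v i (u i) + welfare y ({..<n}-{i}) u - Max (welfare y ({..<n}-{i}) ` outcomes G n)
        \<le> utility G n rk v (y(i:=b')) i"
      using deviation[OF G inj i yb _ uo, of v] vp i unfolding val_profile_def by blast
    moreover have "utility G n rk v (y(i:=b')) i \<le> utility G n rk v y i"
      using ne i \<open>nbid_vec G n b'\<close> unfolding is_NE_def by blast
    ultimately show "utility G n rk v (y(i:=b)) i \<le> utility G n rk v y i" by simp
  qed
qed


lemma total_thm:
  assumes G: "finite G" and inj: "inj_on rk (outcomes G n)"
  shows "total G n rk"
  unfolding total_def
proof (intro allI impI)
  fix v x assume vp: "val_profile G n v" and ne: "is_NE (bid_vec G) G n rk v x"
  have bx: "\<forall>j<n. bid_vec G (x j)" using ne unfolding is_NE_def by blast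
  have xnn: "\<And>j B. j < n \<Longrightarrow> 0 \<le> x j B"
    using bx unfolding bid_vec_def by (metis order_refl)
  define u where "u = alloc G n rk x"
  define Mk where "Mk k = Max (welfare x ({..<n}-{k}) ` outcomes G n)" for k
  define wk where "wk k = (SOME w. w \<in> outcomes G n \<and> welfare x ({..<n}-{k}) w = Mk k)" for k
  have wk: "wk k \<in> outcomes G n \<and> welfare x ({..<n}-{k}) (wk k) = Mk k" for k
  proof -
    obtain w where "w \<in> outcomes G n" "welfare x ({..<n}-{k}) w = Mk k"
      using max_attained[OF G, of n "welfare x ({..<n}-{k})"] unfolding Mk_def by blast
    then show ?thesis unfolding wk_def by (rule someI2[where Q="\<lambda>w. w \<in> outcomes G n \<and> welfare x ({..<n}-{k}) w = Mk k", OF conjI])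
  qed
  define y where "y = (\<lambda>j B. if B = u j \<or> (\<exists>k\<in>{..<n}-{j}. B = wk k j) then x j B else (0::real))"
  have yle: "\<And>S w. S \<subseteq> {..<n} \<Longrightarrow> welfare y S w \<le> welfare x S w"
    unfolding welfare_def y_def by (intro sum_mono) (auto intro: xnn)
  have yeq: "\<And>S. S \<subseteq> {..<n} \<Longrightarrow> welfare y S u = welfare x S u"
    unfolding welfare_def y_def by (intro sum.cong) auto
  have yeqk: "\<And>k. k < n \<Longrightarrow> welfare y ({..<n}-{k}) (wk k) = welfare x ({..<n}-{k}) (wk k)"
    unfolding welfare_def y_def by (intro sum.cong) auto
  have ay: "alloc G n rk y = u"
    unfolding u_def by (rule dominated[OF G inj]) (use yle yeq u_def in auto)
  have My: "Max (welfare y ({..<n}-{k}) ` outcomes G n) = Mk k" if k: "k < n" for k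
  proof (rule antisym)
    show "Max (welfare y ({..<n}-{k}) ` outcomes G n) \<le> Mk k"
      using finite_outcomes[OF G] empty_outcome[of G n] yle max_ge[OF G] unfolding Mk_def
      by (subst Max_le_iff) (auto intro: order_trans[OF yle max_ge[OF G]])
    show "Mk k \<le> Max (welfare y ({..<n}-{k}) ` outcomes G n)"
      using wk[of k] yeqk[OF k] max_ge[OF G] by metis
  qed
  have pay: "payment G n rk y i = payment G n rk x i" if i: "i < n" for i
    unfolding payment_def ay My[OF i] u_def[symmetric] Mk_def[symmetric] using yeq by simp
  have uty: "utility G n rk v y i = utility G n rk v x i" if i: "i < n" for i
    unfolding utility_def ay pay[OF i] u_def ..
  have ynb: "nbid_vec G n (y j)" if j: "j < n" for j
  proof -
    have bv: "bid_vec G (y j)" using bx j unfolding bid_vec_def y_def by auto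
    have "{B. B \<subseteq> G \<and> y j B \<noteq> 0} \<subseteq> insert (u j) ((\<lambda>k. wk k j) ` ({..<n}-{j}))"
      unfolding y_def by auto
    then have "card {B. B \<subseteq> G \<and> y j B \<noteq> 0} \<le> card (insert (u j) ((\<lambda>k. wk k j) ` ({..<n}-{j})))"
      by (rule card_mono[rotated]) simp
    also have "\<dots> \<le> Suc (card ((\<lambda>k. wk k j) ` ({..<n}-{j})))" by (simp add: card_insert_if)
    also have "\<dots> \<le> Suc (card ({..<n}-{j}))" using card_image_le[of "{..<n}-{j}" "\<lambda>k. wk k j"] by simp
    also have "\<dots> = n" using j by simp
    finally show ?thesis unfolding nbid_vec_def using bv by simp
  qed
  have "is_NE (nbid_vec G n) G n rk v y"
    unfolding is_NE_def
  proof (intro conjI allI impI)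
    fix i assume "i < n" then show "nbid_vec G n (y i)" by (rule ynb)
  next
    fix i b assume i: "i < n" and b: "nbid_vec G n b"
    define u' where "u' = alloc G n rk (y(i:=b))"
    have uo: "u' \<in> outcomes G n" unfolding u'_def by (rule alloc_outcome[OF G inj])
    have "utility G n rk v (y(i:=b)) i = v i (u' i) + welfare y ({..<n}-{i}) u' - Mk i"
      unfolding utility_eq u'_def[symmetric] welfare_upd_fun My[OF i] ..
    also have "\<dots> \<le> v i (u' i) + welfare x ({..<n}-{i}) u' - Mk i" using yle[of "{..<n}-{i}"] by auto
    finally have 1: "utility G n rk v (y(i:=b)) i \<le> v i (u' i) + welfare x ({..<n}-{i}) u' - Mk i" .
    obtain b' where "nbid_vec G n b'" and
      2: "v i (u' i) + welfare x ({..<n}-{i}) u' - Mk i \<le> utility G n rk v (x(i:=b')) i"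
      using deviation[OF G inj i bx _ uo, of v] vp i unfolding val_profile_def Mk_def by blast
    have "utility G n rk v (x(i:=b')) i \<le> utility G n rk v x i"
      using ne i nbid_bid[OF \<open>nbid_vec G n b'\<close>] unfolding is_NE_def by blast
    then show "utility G n rk v (y(i:=b)) i \<le> utility G n rk v y i" using 1 2 uty[OF i] by simp
  qed
  then show "\<exists>y. is_NE (nbid_vec G n) G n rk v y \<and> alloc G n rk y = alloc G n rk x
             \<and> (\<forall>i<n. payment G n rk y i = payment G n rk x i)"
    using ay pay u_def by blast
qed

theorem theorem8:
  fixes G :: "'g set" and n :: nat and rk :: "'g outcome \<Rightarrow> nat"
  assumes "finite G"
    and "inj_on rk (outcomes G n)"
  shows "tight G n rk \<and> total G n rk"
  using tight_thm[OF assms] total_thm[OF assms] by simp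

end
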